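(* Let $X$ be a compact Hausdorff space, $\mathcal{A}$ a unital $C^*$-algebra with unit $1$, $\mathcal{E}$ a $*$-subalgebra of $C(X,\mathcal{A})$ such that $1_X\in\bar{\mathcal{E}}$. Let $x\in X$ and $\delta>0$. Then for every selfadjoint $f\in\Delta_2(\mathcal{E})$ there are selfadjoint $g,h\in\bar{\mathcal{E}}$ with $g(x)=f(x)=h(x)$ and $g-\delta\cdot1_X\leq f\leq h+\delta\cdot1_X$.
   Context: $C(X,\mathcal{A})$: continuous maps $X\to\mathcal{A}$, pointwise operations, supremum norm; $1_X$ is the constant map equal to $1$; $\bar{\mathcal{E}}$ is the uniform closure of $\mathcal{E}$. $\Delta_2(\mathcal{E})$ is the set of all $u\in C(X,\mathcal{A})$ such that for all $x,y\in X$ and $\varepsilon>0$ there is $v\in\mathcal{E}$ with $\|v(z)-u(z)\|<\varepsilon$ for $z\in\{x,y\}$. For selfadjoint functions, $u\leq w$ means $u(z)\leq w(z)$ (i.e. $w(z)-u(z)$ nonnegative) for all $z\in X$. *)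

theory Defs
  imports "HOL-Analysis.Analysis"
begin

text \<open>The real structure comes from the
library class real_normed_algebra_1 + banach; complex scalars are added via
cscale, compatible with scaleR.\<close>

class cstar_algebra_1 = real_normed_algebra_1 + banach +
  fixes cscale :: "complex \<Rightarrow> 'a \<Rightarrow> 'a"
    and adj :: "'a \<Rightarrow> 'a"
  assumes cscale_of_real: "cscale (complex_of_real r) x = r *\<^sub>R x"
    and cscale_add_right: "cscale c (x + y) = cscale c x + cscale c y"
    and cscale_add_left: "cscale (c + d) x = cscale c x + cscale d x"
    and cscale_assoc: "cscale c (cscale d x) = cscale (c * d) x"
    and cscale_one: "cscale 1 x = x"
    and norm_cscale: "norm (cscale c x) = cmod c * norm x"
    and cscale_mult_left: "cscale c x * y = cscale c (x * y)"
    and cscale_mult_right: "x * cscale c y = cscale c (x * y)"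
    and adj_adj: "adj (adj x) = x"
    and adj_add: "adj (x + y) = adj x + adj y"
    and adj_cscale: "adj (cscale c x) = cscale (cnj c) (adj x)"
    and adj_mult: "adj (x * y) = adj y * adj x"
    and cstar_identity: "norm (adj x * x) = (norm x)\<^sup>2"

definition cinvertible :: "'a::cstar_algebra_1 \<Rightarrow> bool" where
  "cinvertible b \<longleftrightarrow> (\<exists>c. b * c = 1 \<and> c * b = 1)"

definition cspectrum :: "'a::cstar_algebra_1 \<Rightarrow> complex set" where
  "cspectrum a = {l. \<not> cinvertible (a - cscale l 1)}"

definition selfadjoint :: "'a::cstar_algebra_1 \<Rightarrow> bool" where
  "selfadjoint a \<longleftrightarrow> adj a = a"

definition nonneg :: "'a::cstar_algebra_1 \<Rightarrow> bool" where
  "nonneg a \<longleftrightarrow> selfadjoint a \<and> cspectrum a \<subseteq> {complex_of_real t | t. t \<ge> 0}"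

text \<open>Functions are of type 'x \<Rightarrow> 'a; only their values on topspace X matter.\<close>

definition CXA :: "'x topology \<Rightarrow> ('x \<Rightarrow> 'a::cstar_algebra_1) set" where
  "CXA X = {u. continuous_map X euclidean u}"

definition star_subalgebra :: "'x topology \<Rightarrow> ('x \<Rightarrow> 'a::cstar_algebra_1) set \<Rightarrow> bool" where
  "star_subalgebra X E \<longleftrightarrow> E \<subseteq> CXA X \<and> (\<lambda>z. 0) \<in> E \<and>
     (\<forall>u\<in>E. \<forall>v\<in>E. (\<lambda>z. u z + v z) \<in> E) \<and>
     (\<forall>c. \<forall>u\<in>E. (\<lambda>z. cscale c (u z)) \<in> E) \<and>
     (\<forall>u\<in>E. \<forall>v\<in>E. (\<lambda>z. u z * v z) \<in> E) \<and>
     (\<forall>u\<in>E. (\<lambda>z. adj (u z)) \<in> E)"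

definition uclosure :: "'x topology \<Rightarrow> ('x \<Rightarrow> 'a::cstar_algebra_1) set \<Rightarrow> ('x \<Rightarrow> 'a) set" where
  "uclosure X E = {u \<in> CXA X. \<forall>\<epsilon>>0. \<exists>v\<in>E. \<forall>z\<in>topspace X. norm (v z - u z) < \<epsilon>}"

definition Delta2 :: "'x topology \<Rightarrow> ('x \<Rightarrow> 'a::cstar_algebra_1) set \<Rightarrow> ('x \<Rightarrow> 'a) set" where
  "Delta2 X E = {u \<in> CXA X. \<forall>x\<in>topspace X. \<forall>y\<in>topspace X. \<forall>\<epsilon>>0.
      \<exists>v\<in>E. norm (v x - u x) < \<epsilon> \<and> norm (v y - u y) < \<epsilon>}"

definition sa_fun :: "'x topology \<Rightarrow> ('x \<Rightarrow> 'a::cstar_algebra_1) \<Rightarrow> bool" where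
  "sa_fun X u \<longleftrightarrow> (\<forall>z\<in>topspace X. selfadjoint (u z))"

definition fun_le :: "'x topology \<Rightarrow> ('x \<Rightarrow> 'a::cstar_algebra_1) \<Rightarrow> ('x \<Rightarrow> 'a) \<Rightarrow> bool" where
  "fun_le X u w \<longleftrightarrow> (\<forall>z\<in>topspace X. nonneg (w z - u z))"

end

theory Submission
  imports Defs "HOL-Computational_Algebra.Formal_Power_Series"
begin

lemma cscale_zero_right [simp]: "cscale c (0::'a::cstar_algebra_1) = 0"
proof -
  have "cscale c (0::'a) = cscale c 0 + cscale c 0" by (metis add_0 cscale_add_right)
  thus ?thesis by simp
qed

lemma cscale_minus_right: "cscale c (- x::'a::cstar_algebra_1) = - cscale c x"
  by (metis add_eq_0_iff cscale_add_right cscale_zero_right)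

lemma cscale_diff_right: "cscale c (x - y::'a::cstar_algebra_1) = cscale c x - cscale c y"
  by (metis cscale_add_right cscale_minus_right diff_conv_add_uminus)

lemma cscale_zero_left [simp]: "cscale 0 (x::'a::cstar_algebra_1) = 0"
  using cscale_of_real[of 0 x] by simp

lemma cscale_real [simp]: "cscale (complex_of_real r) (x::'a::cstar_algebra_1) = r *\<^sub>R x"
  by (rule cscale_of_real)

lemma cscale_minus_left: "cscale (- c) (x::'a::cstar_algebra_1) = - cscale c x"
  by (metis add.right_inverse add_eq_0_iff cscale_add_left cscale_zero_left)

lemma adj_zero [simp]: "adj (0::'a::cstar_algebra_1) = 0"
  by (metis add_cancel_right_right adj_add)

lemma adj_minus: "adj (- x::'a::cstar_algebra_1) = - adj x"
  by (metis add_eq_0_iff adj_add adj_zero)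

lemma adj_diff: "adj (x - y::'a::cstar_algebra_1) = adj x - adj y"
  by (metis adj_add adj_minus diff_conv_add_uminus)

lemma adj_scaleR: "adj (r *\<^sub>R x::'a::cstar_algebra_1) = r *\<^sub>R adj x"
  by (metis adj_cscale complex_cnj_complex_of_real cscale_of_real)

lemma adj_one [simp]: "adj (1::'a::cstar_algebra_1) = 1"
proof -
  have "adj (1::'a) = adj 1 * adj (adj 1)" by (simp add: adj_adj)
  also have "\<dots> = adj (adj 1 * 1)" by (rule adj_mult[symmetric])
  also have "\<dots> = 1" by (simp add: adj_adj)
  finally show ?thesis .
qed

lemma norm_adj_le: "norm (x::'a::cstar_algebra_1) \<le> norm (adj x)"
proof (cases "norm x = 0")
  case True thus ?thesis by simp
next
  case False
  have "(norm x)^2 = norm (adj x * x)" by (simp add: cstar_identity)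
  also have "\<dots> \<le> norm (adj x) * norm x" by (rule norm_mult_ineq)
  finally have "norm x * norm x \<le> norm (adj x) * norm x" by (simp add: power2_eq_square)
  thus ?thesis using False norm_ge_zero[of x] by (simp add: mult_le_cancel_right)
qed

lemma norm_adj [simp]: "norm (adj (x::'a::cstar_algebra_1)) = norm x"
  by (metis adj_adj antisym norm_adj_le)

lemma bounded_linear_adj: "bounded_linear (adj :: 'a::cstar_algebra_1 \<Rightarrow> 'a)"
  proof (rule bounded_linear_intro[where K=1])
  show "\<And>x y. adj (x + y) = adj x + adj (y::'a)" by (rule adj_add)
  show "\<And>r x. adj (r *\<^sub>R x) = r *\<^sub>R adj (x::'a)" by (rule adj_scaleR)
  show "\<And>x. norm (adj (x::'a)) \<le> norm x * 1" by simp
qed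

lemma adj_power: "adj ((x::'a::cstar_algebra_1) ^ n) = adj x ^ n"
  proof (induction n)
  case (Suc n)
  have "adj (x ^ Suc n) = adj (x ^ n * x)" by (simp add: power_commutes)
  also have "\<dots> = adj x * adj (x ^ n)" by (rule adj_mult)
  also have "\<dots> = adj x ^ Suc n" by (simp add: Suc)
  finally show ?case .
qed simp

lemma adj_of_real_one: "adj (r *\<^sub>R (1::'a::cstar_algebra_1)) = r *\<^sub>R 1"
  by (simp add: adj_scaleR)

lemma cscale_mult_both: "cscale a (x::'a::cstar_algebra_1) * cscale b y = cscale (a*b) (x*y)"
  by (simp add: cscale_mult_left cscale_mult_right cscale_assoc mult.commute)

section \<open>Neumann series and spectrum\<close>

lemma neumann:
  fixes y :: "'a::cstar_algebra_1"
  assumes "norm y < 1"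
  shows "summable (\<lambda>n. y ^ n)" "(1 - y) * (\<Sum>n. y ^ n) = 1" "(\<Sum>n. y ^ n) * (1 - y) = 1"
proof -
  have g: "summable (\<lambda>n. norm y ^ n)" by (rule summable_geometric) (use assms in simp)
  have sn: "summable (\<lambda>n. norm (y ^ n))"
    by (rule summable_comparison_test'[OF g, of 0]) (simp add: norm_power_ineq)
  thus s: "summable (\<lambda>n. y ^ n)" by (rule summable_norm_cancel)
  have lim: "(\<lambda>n. y ^ n) \<longlonglongrightarrow> 0"
    by (rule LIMSEQ_power_zero) (use assms in auto)
  have tel: "(\<lambda>n. y ^ n - y ^ Suc n) sums (y ^ 0 - 0)"
    by (rule telescope_sums'[OF lim])
  have "(1 - y) * (\<Sum>n. y ^ n) = (\<Sum>n. (1 - y) * y ^ n)"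
    by (rule suminf_mult[OF s, symmetric])
  also have "\<dots> = (\<Sum>n. y ^ n - y ^ Suc n)" by (simp add: algebra_simps)
  also have "\<dots> = 1" using sums_unique[OF tel] by simp
  finally show "(1 - y) * (\<Sum>n. y ^ n) = 1" .
  have "(\<Sum>n. y ^ n) * (1 - y) = (\<Sum>n. y ^ n * (1 - y))"
    by (rule suminf_mult2[OF s])
  also have "\<dots> = (\<Sum>n. y ^ n - y ^ Suc n)" by (simp add: algebra_simps power_commutes)
  also have "\<dots> = 1" using sums_unique[OF tel] by simp
  finally show "(\<Sum>n. y ^ n) * (1 - y) = 1" .
qed

lemma cinvertible_one_minus: "norm (y::'a::cstar_algebra_1) < 1 \<Longrightarrow> cinvertible (1 - y)"
  unfolding cinvertible_def using neumann by blast

lemma cinvertible_shift: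
  fixes d :: "'a::cstar_algebra_1"
  assumes "norm d < cmod \<mu>"
  shows "cinvertible (d - cscale \<mu> 1)"
proof -
  have mu: "\<mu> \<noteq> 0" using assms by (metis norm_ge_zero norm_zero not_less)
  define z where "z = cscale (1/\<mu>) d"
  have nz: "norm z < 1" using assms mu
    by (simp add: z_def norm_cscale norm_divide divide_less_eq)
  then obtain N where N: "(1 - z) * N = 1" "N * (1 - z) = 1"
    using cinvertible_one_minus unfolding cinvertible_def by blast
  have eq: "d - cscale \<mu> 1 = cscale (-\<mu>) (1 - z)"
  proof -
    have "cscale (-\<mu>) z = cscale (-1) d" using mu by (simp add: z_def cscale_assoc)
    also have "\<dots> = - d" using cscale_of_real[of "-1" d] by simp
    finally show ?thesis by (simp add: cscale_diff_right cscale_minus_left)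
  qed
  show ?thesis unfolding cinvertible_def eq
  proof (intro exI[of _ "cscale (-1/\<mu>) N"] conjI)
    show "cscale (- \<mu>) (1 - z) * cscale (- 1 / \<mu>) N = 1"
      using mu by (simp add: cscale_mult_both N cscale_one)
    show "cscale (- 1 / \<mu>) N * cscale (- \<mu>) (1 - z) = 1"
      using mu by (simp add: cscale_mult_both N cscale_one)
  qed
qed

lemma norm_sa_plus_i:
  fixes b :: "'a::cstar_algebra_1"
  assumes "adj b = b"
  shows "(norm (b + cscale (\<i> * complex_of_real t) 1))^2 \<le> (norm b)^2 + t^2"
proof -
  define v where "v = b + cscale (\<i> * complex_of_real t) 1"
  have av: "adj v = b + cscale (- \<i> * complex_of_real t) 1"
    by (simp add: v_def adj_add adj_cscale assms)
  have "adj v * v = b * b + (cscale (\<i> * complex_of_real t) b + cscale (- \<i> * complex_of_real t) b)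
        + cscale ((- \<i> * complex_of_real t) * (\<i> * complex_of_real t)) 1"
  proof -
    have "adj v * v = (b + cscale (- \<i> * complex_of_real t) 1) * (b + cscale (\<i> * complex_of_real t) 1)"
      by (simp only: av) (simp add: v_def)
    thus ?thesis
      by (simp add: distrib_left distrib_right cscale_mult_both cscale_mult_left cscale_mult_right add_ac cscale_add_right cscale_assoc)
  qed
  also have "cscale (\<i> * complex_of_real t) b + cscale (- \<i> * complex_of_real t) b = 0"
    by (metis add.right_inverse cscale_add_left cscale_zero_left mult_minus_left)
  also have "(- \<i> * complex_of_real t) * (\<i> * complex_of_real t) = complex_of_real (t^2)"
    by (simp add: power2_eq_square algebra_simps)
  finally have "adj v * v = b * b + (t^2) *\<^sub>R 1" by (simp flip: of_real_power)
  hence "(norm v)^2 = norm (b * b + (t^2) *\<^sub>R 1)" by (simp add: cstar_identity[symmetric])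
  also have "\<dots> \<le> norm (b * b) + norm ((t^2) *\<^sub>R (1::'a))" by (rule norm_triangle_ineq)
  also have "\<dots> \<le> (norm b)^2 + t^2"
    using norm_mult_ineq[of b b] by (simp add: power2_eq_square)
  finally show ?thesis by (simp add: v_def)
qed

lemma cscale_complex_split:
  "cscale l (1::'a::cstar_algebra_1) = (Re l) *\<^sub>R 1 + cscale (\<i> * complex_of_real (Im l)) 1"
proof -
  have "l = complex_of_real (Re l) + \<i> * complex_of_real (Im l)" by (simp add: complex_eq_iff)
  hence "cscale l (1::'a) = cscale (complex_of_real (Re l) + \<i> * complex_of_real (Im l)) 1" by simp
  thus ?thesis by (simp add: cscale_add_left)
qed

lemma spectrum_sa_real:
  fixes c :: "'a::cstar_algebra_1"
  assumes "adj c = c" and l: "\<not> cinvertible (c - cscale l 1)"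
  shows "Im l = 0"
proof (rule ccontr)
  assume ne: "Im l \<noteq> 0"
  define b where "b = c - Re l *\<^sub>R 1"
  have ab: "adj b = b" by (simp add: b_def adj_diff adj_scaleR assms)
  define \<beta> where "\<beta> = Im l"
  define t where "t = ((norm b)^2 + 1) / (2 * \<beta>)"
  have key: "c - cscale l 1 = (b + cscale (\<i> * complex_of_real t) 1)
             - cscale (\<i> * complex_of_real (\<beta> + t)) 1"
  proof -
    have "cscale (\<i> * complex_of_real (\<beta> + t)) (1::'a)
          = cscale (\<i> * complex_of_real \<beta>) 1 + cscale (\<i> * complex_of_real t) 1"
      by (simp add: distrib_left cscale_add_left)
    thus ?thesis unfolding b_def \<beta>_def by (simp add: cscale_complex_split[of l] algebra_simps)
  qed
  have "\<not> (norm (b + cscale (\<i> * complex_of_real t) 1) < cmod (\<i> * complex_of_real (\<beta> + t)))"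
    using l cinvertible_shift unfolding key by blast
  hence "\<bar>\<beta> + t\<bar> \<le> norm (b + cscale (\<i> * complex_of_real t) 1)"
    by (simp add: norm_mult flip: of_real_add)
  hence "(\<beta> + t)^2 \<le> (norm (b + cscale (\<i> * complex_of_real t) 1))^2"
    by (metis abs_ge_zero power2_abs power_mono)
  also have "\<dots> \<le> (norm b)^2 + t^2" by (rule norm_sa_plus_i[OF ab])
  finally have "\<beta>^2 + 2 * \<beta> * t \<le> (norm b)^2" by (simp add: power2_eq_square algebra_simps)
  moreover have "2 * \<beta> * t = (norm b)^2 + 1" using ne by (simp add: t_def \<beta>_def)
  moreover have "\<beta>^2 \<ge> 0" by simp
  ultimately show False by linarith
qed

lemma nonneg_cert:
  fixes c :: "'a::cstar_algebra_1"
  assumes sa: "adj c = c" and s: "0 \<le> s" and n: "norm (s *\<^sub>R 1 - c) \<le> s"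
  shows "nonneg c"
  unfolding nonneg_def selfadjoint_def cspectrum_def
proof (intro conjI sa subsetI)
  fix l assume "l \<in> {l. \<not> cinvertible (c - cscale l 1)}"
  hence l: "\<not> cinvertible (c - cscale l 1)" by simp
  have im: "Im l = 0" by (rule spectrum_sa_real[OF sa l])
  hence leq: "l = complex_of_real (Re l)" by (simp add: complex_eq_iff)
  have "Re l \<ge> 0"
  proof (rule ccontr)
    assume neg: "\<not> Re l \<ge> 0"
    have "c - cscale l 1 = (c - s *\<^sub>R 1) - cscale (complex_of_real (Re l - s)) 1"
      by (subst leq) (simp add: algebra_simps scaleR_diff_left flip: of_real_diff)
    moreover have "norm (c - s *\<^sub>R 1) < cmod (complex_of_real (Re l - s))"
      using n neg s by (simp add: norm_minus_commute flip: of_real_diff)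
    ultimately have "cinvertible (c - cscale l 1)" using cinvertible_shift by metis
    with l show False by simp
  qed
  with leq show "l \<in> {complex_of_real t |t. 0 \<le> t}" by blast
qed

section \<open>Unitary trick and square roots\<close>

lemma unit_bound:
  fixes p w :: "'a::cstar_algebra_1"
  assumes ap: "adj p = p" and aw: "adj w = w" and c: "p * w = w * p" and s: "p * p + w * w = 1"
  shows "norm p \<le> 1"
proof -
  define v where "v = p + cscale \<i> w"
  have av: "adj v = p + cscale (- \<i>) w" by (simp add: v_def adj_add adj_cscale ap aw)
  have z: "cscale \<i> (q::'a) + cscale (- \<i>) q = 0" for q
    by (metis add.right_inverse cscale_add_left cscale_zero_left)
  have "adj v * v = (p + cscale (- \<i>) w) * (p + cscale \<i> w)"
    by (subst av) (simp only: v_def)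
  also have "\<dots> = p * p + p * cscale \<i> w + (cscale (- \<i>) w * p + cscale (- \<i>) w * cscale \<i> w)"
    by (simp only: distrib_left distrib_right add_ac)
  also have "p * cscale \<i> w = cscale \<i> (p * w)" by (rule cscale_mult_right)
  also have "cscale (- \<i>) w * p = cscale (- \<i>) (p * w)" by (simp only: cscale_mult_left c)
  also have "cscale (- \<i>) w * cscale \<i> w = w * w" by (simp add: cscale_mult_both cscale_one)
  also have "p * p + cscale \<i> (p * w) + (cscale (- \<i>) (p * w) + w * w) = p * p + w * w + (cscale \<i> (p * w) + cscale (- \<i>) (p * w))"
    by (simp only: add_ac)
  also have "\<dots> = 1" by (simp only: z s add_0_right)
  finally have "adj v * v = 1" .
  hence "(norm v)^2 = 1" by (simp add: cstar_identity[symmetric])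
  hence nv: "norm v = 1" using norm_ge_zero[of v] by (auto simp: power2_eq_1_iff)
  have "v + adj v = p + p + (cscale \<i> w + cscale (- \<i>) w)"
    by (subst av) (simp only: v_def add_ac)
  also have "\<dots> = 2 *\<^sub>R p" by (simp only: z add_0_right scaleR_2)
  finally have "v + adj v = 2 *\<^sub>R p" .
  hence "norm (2 *\<^sub>R p) \<le> norm v + norm (adj v)" by (metis norm_triangle_ineq)
  thus ?thesis using nv by simp
qed

lemma gchoose_half_bound: "\<bar>(1/2::real) gchoose k\<bar> \<le> 1"
proof (induction k)
  case (Suc k)
  have "(1/2::real) * ((1/2) gchoose k) = of_nat k * ((1/2) gchoose k) + of_nat (Suc k) * ((1/2) gchoose (Suc k))"
    by (rule gbinomial_mult_1)
  hence eq: "((1/2::real) gchoose (Suc k)) = (1/2 - real k) / (real k + 1) * ((1/2) gchoose k)"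
    by (simp add: field_simps)
  have "\<bar>1/2 - real k\<bar> \<le> \<bar>real k + 1\<bar>" by simp
  hence "\<bar>(1/2 - real k) / (real k + 1)\<bar> \<le> 1" by (simp add: abs_divide divide_le_eq_1)
  hence "\<bar>((1/2::real) gchoose (Suc k))\<bar> \<le> 1 * 1"
    unfolding eq abs_mult using Suc by (intro mult_mono) auto
  thus ?case by simp
qed simp

definition sqc :: "nat \<Rightarrow> real" where "sqc k = (-1)^k * ((1/2) gchoose k)"

lemma sqc_bound: "\<bar>sqc k\<bar> \<le> 1"
  using gchoose_half_bound[of k] by (simp add: sqc_def abs_mult)

lemma sqc_conv: "(\<Sum>i\<le>k. sqc i * sqc (k - i)) = (if k = 0 then 1 else if k = 1 then -1 else 0)"
proof -
  have "(\<Sum>i\<le>k. sqc i * sqc (k - i)) = (\<Sum>i\<le>k. (-1)^k * (((1/2::real) gchoose i) * ((1/2) gchoose (k - i))))"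
  proof (rule sum.cong)
    fix i assume "i \<in> {..k}"
    hence "(-1::real)^i * (-1)^(k-i) = (-1)^k" by (simp only: power_add[symmetric]) simp
    thus "sqc i * sqc (k - i) = (-1)^k * (((1/2::real) gchoose i) * ((1/2) gchoose (k - i)))"
    proof -
      have "sqc i * sqc (k - i) = ((-1::real)^i * (-1)^(k-i)) * (((1/2::real) gchoose i) * ((1/2) gchoose (k - i)))"
        unfolding sqc_def by (simp only: mult_ac)
      thus ?thesis using \<open>(-1::real)^i * (-1)^(k-i) = (-1)^k\<close> by simp
    qed
  qed simp
  also have "\<dots> = (-1)^k * ((1/2 + 1/2::real) gchoose k)"
  proof -
    have V: "(\<Sum>i=0..k. ((1/2::real) gchoose i) * ((1/2) gchoose (k - i))) = (1/2 + 1/2) gchoose k"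
      by (rule gbinomial_Vandermonde)
    show ?thesis by (simp only: sum_distrib_left[symmetric] atMost_atLeast0 V)
  qed
  also have "(1/2 + 1/2::real) gchoose k = of_nat (1 choose k)"
    by (simp add: binomial_gbinomial)
  also have "(-1::real)^k * of_nat (1 choose k) = (if k = 0 then 1 else if k = 1 then -1 else 0)"
  proof -
    consider "k = 0" | "k = 1" | "k > 1" by linarith
    thus ?thesis
    proof cases
      case 3
      hence "(1 choose k) = 0" by (simp add: binomial_eq_0)
      thus ?thesis using 3 by simp
    qed simp_all
  qed
  finally show ?thesis .
qed

lemma sqrt_exists:
  fixes y :: "'a::cstar_algebra_1"
  assumes ay: "adj y = y" and ny: "norm y < 1"
  shows "\<exists>w. adj w = w \<and> w * y = y * w \<and> w * w = 1 - y * y"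
proof -
  define a where "a k = sqc k *\<^sub>R y ^ (2 * k)" for k
  have ny2: "norm y ^ 2 < 1" using ny by (simp add: power_less_one_iff abs_less_iff)
  have na: "norm (a k) \<le> (norm y ^ 2) ^ k" for k
  proof -
    have "norm (a k) = \<bar>sqc k\<bar> * norm (y ^ (2 * k))" by (simp add: a_def)
    also have "\<dots> \<le> 1 * norm y ^ (2 * k)"
      by (intro mult_mono sqc_bound norm_power_ineq) auto
    finally show ?thesis by (simp add: power_mult)
  qed
  have g: "summable (\<lambda>n. (norm y ^ 2) ^ n)" by (rule summable_geometric) (use ny2 in simp)
  have sn: "summable (\<lambda>k. norm (a k))"
    by (rule summable_comparison_test'[OF g, of 0]) (simp add: na)
  hence s: "summable a" by (rule summable_norm_cancel)
  define w where "w = suminf a"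
  have cp: "(\<lambda>k. \<Sum>i\<le>k. a i * a (k - i)) sums (w * w)"
    unfolding w_def by (rule Cauchy_product_sums[OF sn sn])
  have "(\<lambda>k. \<Sum>i\<le>k. a i * a (k - i)) = (\<lambda>k. (\<Sum>i\<le>k. sqc i * sqc (k - i)) *\<^sub>R y ^ (2 * k))"
  proof
    fix k
    have "(\<Sum>i\<le>k. a i * a (k - i)) = (\<Sum>i\<le>k. (sqc i * sqc (k - i)) *\<^sub>R y ^ (2 * k))"
    proof (rule sum.cong)
      fix i assume "i \<in> {..k}"
      hence "2 * i + 2 * (k - i) = 2 * k" by simp
      hence "y ^ (2 * i) * y ^ (2 * (k - i)) = y ^ (2 * k)" by (metis power_add)
      thus "a i * a (k - i) = (sqc i * sqc (k - i)) *\<^sub>R y ^ (2 * k)" by (simp add: a_def)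
    qed simp
    thus "(\<Sum>i\<le>k. a i * a (k - i)) = (\<Sum>i\<le>k. sqc i * sqc (k - i)) *\<^sub>R y ^ (2 * k)"
      by (simp add: scaleR_sum_left)
  qed
  also have "\<dots> = (\<lambda>k. if k = 0 then 1 else if k = 1 then - (y * y) else 0)"
    by (auto simp: sqc_conv power2_eq_square)
  finally have "(\<lambda>k. if k = 0 then 1 else if k = 1 then - (y * y) else 0) sums (w * w)" using cp by simp
  moreover have "(\<lambda>k. if k = 0 then 1 else if k = 1 then - (y * y) else (0::'a)) sums (1 - y * y)"
    using sums_finite[of "{0::nat,1}" "\<lambda>k. if k = 0 then 1 else if k = 1 then - (y * y) else (0::'a)"] by simp
  ultimately have ww: "w * w = 1 - y * y" using sums_unique2 by blast
  have "y * w = (\<Sum>k. y * a k)" unfolding w_def by (rule suminf_mult[OF s, symmetric])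
  also have "\<dots> = (\<Sum>k. a k * y)" by (simp add: a_def power_commutes)
  also have "\<dots> = w * y" unfolding w_def by (rule suminf_mult2[OF s, symmetric])
  finally have c: "w * y = y * w" by simp
  have "adj w = (\<Sum>k. adj (a k))" unfolding w_def by (rule bounded_linear.suminf[OF bounded_linear_adj s])
  also have "\<dots> = w" unfolding w_def
    by (rule arg_cong[where f=suminf]) (simp add: a_def fun_eq_iff adj_scaleR adj_power ay)
  finally show ?thesis using ww c by blast
qed

lemma square_cert:
  fixes y :: "'a::cstar_algebra_1"
  assumes ay: "adj y = y" and s: "(norm y)^2 < s"
  shows "norm (s *\<^sub>R 1 - y * y) \<le> s"
proof -
  have s0: "s > 0" using s by (smt (verit) zero_le_power2)
  define y' where "y' = (1 / sqrt s) *\<^sub>R y"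
  have ay': "adj y' = y'" by (simp add: y'_def adj_scaleR ay)
  have "norm y < sqrt s" using s s0 by (metis norm_ge_zero real_less_rsqrt)
  hence ny': "norm y' < 1" using s0 by (simp add: y'_def divide_less_eq)
  obtain w where w: "adj w = w" "w * y' = y' * w" "w * w = 1 - y' * y'"
    using sqrt_exists[OF ay' ny'] by blast
  have "norm w \<le> 1" by (rule unit_bound[OF w(1) ay' w(2)]) (simp add: w(3))
  hence "norm (1 - y' * y') \<le> 1"
    using w by (metis cstar_identity abs_norm_cancel norm_ge_zero power_le_one)
  moreover have "s *\<^sub>R 1 - y * y = s *\<^sub>R (1 - y' * y')"
  proof -
    have "(1 / sqrt s) * (1 / sqrt s) = 1 / s" using s0 by (simp add: field_simps)
    hence "y' * y' = (1 / s) *\<^sub>R (y * y)" by (simp add: y'_def)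
    thus ?thesis using s0 by (simp add: scaleR_right_diff_distrib)
  qed
  ultimately show ?thesis using s0 by simp
qed



lemma cont_scaleR: "continuous_map X euclidean (u::'x \<Rightarrow> 'a::real_normed_vector) \<Longrightarrow> continuous_map X euclidean (\<lambda>z. r *\<^sub>R u z)"
  by (simp add: continuous_map_atin tendsto_scaleR)

lemma cont_mult: "continuous_map X euclidean (u::'x \<Rightarrow> 'a::real_normed_algebra) \<Longrightarrow> continuous_map X euclidean v \<Longrightarrow> continuous_map X euclidean (\<lambda>z. u z * v z)"
  by (simp add: continuous_map_atin tendsto_mult)

lemma cont_adj: "continuous_map X euclidean (u::'x \<Rightarrow> 'a::cstar_algebra_1) \<Longrightarrow> continuous_map X euclidean (\<lambda>z. adj (u z))"
  by (simp add: continuous_map_atin bounded_linear.tendsto[OF bounded_linear_adj])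

lemma rational_bound:
  fixes t q :: "'a::cstar_algebra_1"
  assumes at: "adj t = t" and K: "K > 0"
    and mq: "(1 + K *\<^sub>R (t * t)) * q = 1" and qm: "q * (1 + K *\<^sub>R (t * t)) = 1"
  shows "adj (t * q) = t * q" "norm (t * q) \<le> 1 / (2 * sqrt K)"
    "t * q - t = - (K *\<^sub>R (t * (t * (t * q))))"
proof -
  define m where "m = 1 + K *\<^sub>R (t * t)"
  have mt: "m * t = t * m" by (simp add: m_def algebra_simps)
  have qt: "q * t = t * q"
  proof -
    have "q * t = q * t * (m * q)" using mq by (simp add: m_def)
    also have "\<dots> = q * (m * t) * q" by (simp add: mt mult.assoc)
    also have "\<dots> = (q * m) * t * q" by (simp add: mult.assoc)
    also have "\<dots> = t * q" using qm by (simp add: m_def)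
    finally show ?thesis .
  qed
  have qt': "q * (t * y) = t * (q * y)" for y by (simp add: mult.assoc[symmetric] qt)
  have am: "adj m = m" by (simp add: m_def adj_add adj_scaleR adj_mult at)
  have aq: "adj q = q"
  proof -
    have "adj q * m = 1" using mq am by (metis adj_mult adj_one m_def)
    have "adj q = adj q * (m * q)" using mq by (simp add: m_def)
    also have "\<dots> = (adj q * m) * q" by (simp only: mult.assoc)
    finally show ?thesis using \<open>adj q * m = 1\<close> by simp
  qed
  show atq: "adj (t * q) = t * q" by (simp add: adj_mult aq at qt)
  have h: "q + K *\<^sub>R (t * (t * q)) = 1" using mq by (simp add: algebra_simps)
  show "t * q - t = - (K *\<^sub>R (t * (t * (t * q))))"
  proof -
    have "t * q - t = t * q - t * (q + K *\<^sub>R (t * (t * q)))" by (simp add: h)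
    thus ?thesis by (simp add: algebra_simps)
  qed
  have sK: "sqrt K * sqrt K = K" using K by simp
  define p where "p = (2 * sqrt K) *\<^sub>R (t * q)"
  define w where "w = q - K *\<^sub>R (q * (t * t))"
  have ap: "adj p = p" by (simp add: p_def adj_scaleR atq)
  have aw: "adj w = w" by (simp add: w_def adj_diff adj_scaleR adj_mult aq at qt algebra_simps qt')
  have pw: "p * w = w * p" by (simp add: p_def w_def algebra_simps qt qt')
  have "p * p + w * w = (q + K *\<^sub>R (t * (t * q))) * (q + K *\<^sub>R (t * (t * q)))"
  proof -
    have s4: "sqrt K * (sqrt K * 4) = K + (K + (K + K))" using sK by (simp add: algebra_simps)
    have e4: "(sqrt K * (sqrt K * 4)) *\<^sub>R y = K *\<^sub>R y + (K *\<^sub>R y + (K *\<^sub>R y + K *\<^sub>R y))" for y :: 'a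
      by (simp only: s4 scaleR_add_left)
    show ?thesis by (simp add: p_def w_def algebra_simps qt qt' sK e4)
  qed
  also have "\<dots> = 1" by (simp add: h)
  finally have "norm p \<le> 1" by (intro unit_bound[OF ap aw pw])
  hence "2 * sqrt K * norm (t * q) \<le> 1" using K by (simp add: p_def)
  thus "norm (t * q) \<le> 1 / (2 * sqrt K)" using K by (simp add: field_simps mult.commute)
qed

locale cxa =
  fixes X :: "'x topology" and E :: "('x \<Rightarrow> 'a::cstar_algebra_1) set"
  assumes cpt: "compact_space X" and sub: "star_subalgebra X E" and one: "(\<lambda>z. 1) \<in> uclosure X E"
begin

abbreviation "U \<equiv> uclosure X E"

lemma E_CXA: "E \<subseteq> CXA X" using sub by (simp add: star_subalgebra_def)

lemma E_add: "u \<in> E \<Longrightarrow> v \<in> E \<Longrightarrow> (\<lambda>z. u z + v z) \<in> E" using sub by (simp add: star_subalgebra_def)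
lemma E_mult: "u \<in> E \<Longrightarrow> v \<in> E \<Longrightarrow> (\<lambda>z. u z * v z) \<in> E" using sub by (simp add: star_subalgebra_def)
lemma E_adj: "u \<in> E \<Longrightarrow> (\<lambda>z. adj (u z)) \<in> E" using sub by (simp add: star_subalgebra_def)
lemma E_cscale: "u \<in> E \<Longrightarrow> (\<lambda>z. cscale c (u z)) \<in> E" using sub by (simp add: star_subalgebra_def)
lemma E_scaleR: "u \<in> E \<Longrightarrow> (\<lambda>z. r *\<^sub>R u z) \<in> E" using E_cscale[of u "complex_of_real r"] by simp
lemma E_diff: "u \<in> E \<Longrightarrow> v \<in> E \<Longrightarrow> (\<lambda>z. u z - v z) \<in> E"
  using E_add[of u "\<lambda>z. (-1) *\<^sub>R v z"] E_scaleR[of v "-1"] by simp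

lemma bounded_CXA: "u \<in> CXA X \<Longrightarrow> \<exists>B. \<forall>z\<in>topspace X. norm (u z) \<le> B"
proof -
  assume "u \<in> CXA X"
  hence c: "continuous_map X euclidean u" by (simp add: CXA_def)
  have "compactin X (topspace X)" using cpt by (simp add: compact_space_def)
  hence "compactin euclidean (u ` topspace X)" by (rule image_compactin[OF _ c])
  hence "compact (u ` topspace X)" by simp
  hence "bounded (u ` topspace X)" by (rule compact_imp_bounded)
  thus ?thesis by (auto simp: bounded_iff)
qed

lemma U_CXA: "u \<in> U \<Longrightarrow> u \<in> CXA X" by (simp add: uclosure_def)

lemma U_cont: "u \<in> U \<Longrightarrow> continuous_map X euclidean u" by (simp add: uclosure_def CXA_def)

lemma U_approx: "u \<in> U \<Longrightarrow> \<epsilon> > 0 \<Longrightarrow> \<exists>v\<in>E. \<forall>z\<in>topspace X. norm (v z - u z) < \<epsilon>"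
  by (simp add: uclosure_def)

lemma U_bounded: "u \<in> U \<Longrightarrow> \<exists>B. \<forall>z\<in>topspace X. norm (u z) \<le> B"
  using U_CXA bounded_CXA by blast

lemma E_U: "u \<in> E \<Longrightarrow> u \<in> U"
  using E_CXA by (auto simp: uclosure_def intro: bexI[of _ u])

lemma U_add: assumes "u \<in> U" "v \<in> U" shows "(\<lambda>z. u z + v z) \<in> U"
  unfolding uclosure_def CXA_def
proof (intro CollectI conjI allI impI)
  show "continuous_map X euclidean (\<lambda>z. u z + v z)"
    using assms U_cont by (simp add: continuous_map_add)
  fix \<epsilon> :: real assume e: "\<epsilon> > 0"
  obtain u' where u': "u' \<in> E" "\<forall>z\<in>topspace X. norm (u' z - u z) < \<epsilon>/2"
    using U_approx[OF assms(1), of "\<epsilon>/2"] e by auto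
  obtain v' where v': "v' \<in> E" "\<forall>z\<in>topspace X. norm (v' z - v z) < \<epsilon>/2"
    using U_approx[OF assms(2), of "\<epsilon>/2"] e by auto
  show "\<exists>w\<in>E. \<forall>z\<in>topspace X. norm (w z - (u z + v z)) < \<epsilon>"
  proof (intro bexI[OF _ E_add[OF u'(1) v'(1)]] ballI)
    fix z assume z: "z \<in> topspace X"
    have "norm (u' z + v' z - (u z + v z)) \<le> norm (u' z - u z) + norm (v' z - v z)"
      by (metis add_diff_add norm_triangle_ineq)
    thus "norm (u' z + v' z - (u z + v z)) < \<epsilon>" using u'(2) v'(2) z by fastforce
  qed
qed

lemma U_scaleR: assumes "u \<in> U" shows "(\<lambda>z. r *\<^sub>R u z) \<in> U"
  unfolding uclosure_def CXA_def
proof (intro CollectI conjI allI impI)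
  show "continuous_map X euclidean (\<lambda>z. r *\<^sub>R u z)"
    using assms U_cont by (simp add: cont_scaleR)
  fix \<epsilon> :: real assume e: "\<epsilon> > 0"
  obtain u' where u': "u' \<in> E" "\<forall>z\<in>topspace X. norm (u' z - u z) < \<epsilon>/(\<bar>r\<bar> + 1)"
    using U_approx[OF assms(1), of "\<epsilon>/(\<bar>r\<bar>+1)"] e by auto
  show "\<exists>w\<in>E. \<forall>z\<in>topspace X. norm (w z - r *\<^sub>R u z) < \<epsilon>"
  proof (intro bexI[OF _ E_scaleR[OF u'(1)]] ballI)
    fix z assume z: "z \<in> topspace X"
    have "norm (r *\<^sub>R u' z - r *\<^sub>R u z) = \<bar>r\<bar> * norm (u' z - u z)"
      by (metis norm_scaleR scaleR_diff_right)
    also have "\<dots> \<le> \<bar>r\<bar> * (\<epsilon>/(\<bar>r\<bar> + 1))" using u'(2) z by (intro mult_left_mono) auto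
    also have "\<dots> < \<epsilon>" using e by (simp add: field_simps)
    finally show "norm (r *\<^sub>R u' z - r *\<^sub>R u z) < \<epsilon>" .
  qed
qed

lemma U_adj: assumes "u \<in> U" shows "(\<lambda>z. adj (u z)) \<in> U"
  unfolding uclosure_def CXA_def
proof (intro CollectI conjI allI impI)
  show "continuous_map X euclidean (\<lambda>z. adj (u z))"
    using assms U_cont by (simp add: cont_adj)
  fix \<epsilon> :: real assume e: "\<epsilon> > 0"
  obtain u' where u': "u' \<in> E" "\<forall>z\<in>topspace X. norm (u' z - u z) < \<epsilon>"
    using U_approx[OF assms(1), of "\<epsilon>"] e by auto
  show "\<exists>w\<in>E. \<forall>z\<in>topspace X. norm (w z - adj (u z)) < \<epsilon>"
    by (intro bexI[OF _ E_adj[OF u'(1)]] ballI) (use u' in \<open>simp add: adj_diff[symmetric]\<close>)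
qed

lemma U_mult: assumes "u \<in> U" "v \<in> U" shows "(\<lambda>z. u z * v z) \<in> U"
  unfolding uclosure_def CXA_def
proof (intro CollectI conjI allI impI)
  show "continuous_map X euclidean (\<lambda>z. u z * v z)"
    using assms U_cont by (simp add: cont_mult)
  fix \<epsilon> :: real assume e: "\<epsilon> > 0"
  obtain Bu where Bu: "\<forall>z\<in>topspace X. norm (u z) \<le> Bu" using U_bounded[OF assms(1)] by blast
  obtain Bv where Bv: "\<forall>z\<in>topspace X. norm (v z) \<le> Bv" using U_bounded[OF assms(2)] by blast
  define \<eta> where "\<eta> = min 1 (\<epsilon> / (\<bar>Bu\<bar> + \<bar>Bv\<bar> + 2))"
  have D: "\<bar>Bu\<bar> + \<bar>Bv\<bar> + 2 > 0" by simp
  have \<eta>: "\<eta> > 0" "\<eta> \<le> 1" "\<eta> * (\<bar>Bu\<bar> + \<bar>Bv\<bar> + 2) \<le> \<epsilon>"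
  proof -
    show "\<eta> > 0" using e D by (simp add: \<eta>_def)
    show "\<eta> \<le> 1" by (simp add: \<eta>_def)
    have "\<eta> \<le> \<epsilon> / (\<bar>Bu\<bar> + \<bar>Bv\<bar> + 2)" by (simp add: \<eta>_def)
    thus "\<eta> * (\<bar>Bu\<bar> + \<bar>Bv\<bar> + 2) \<le> \<epsilon>" using D by (simp add: pos_le_divide_eq)
  qed
  obtain u' where u': "u' \<in> E" "\<forall>z\<in>topspace X. norm (u' z - u z) < \<eta>"
    using U_approx[OF assms(1) \<eta>(1)] by auto
  obtain v' where v': "v' \<in> E" "\<forall>z\<in>topspace X. norm (v' z - v z) < \<eta>"
    using U_approx[OF assms(2) \<eta>(1)] by auto
  show "\<exists>w\<in>E. \<forall>z\<in>topspace X. norm (w z - u z * v z) < \<epsilon>"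
  proof (intro bexI[OF _ E_mult[OF u'(1) v'(1)]] ballI)
    fix z assume z: "z \<in> topspace X"
    have nv': "norm (v' z) \<le> \<bar>Bv\<bar> + 1"
      using v'(2) Bv z \<eta>(2) norm_triangle_ineq2[of "v' z" "v z"] by fastforce
    have "u' z * v' z - u z * v z = (u' z - u z) * v' z + u z * (v' z - v z)"
      by (simp add: algebra_simps)
    hence "norm (u' z * v' z - u z * v z) \<le> norm (u' z - u z) * norm (v' z) + norm (u z) * norm (v' z - v z)"
      by (metis norm_triangle_le norm_mult_ineq add_mono)
    also have "\<dots> \<le> \<eta> * (\<bar>Bv\<bar> + 1) + \<bar>Bu\<bar> * \<eta>"
    proof (rule add_mono)
      show "norm (u' z - u z) * norm (v' z) \<le> \<eta> * (\<bar>Bv\<bar> + 1)"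
        by (intro mult_mono) (use u'(2) z nv' \<eta>(1) in \<open>auto intro: less_imp_le\<close>)
      have "norm (u z) \<le> \<bar>Bu\<bar>" using Bu z by fastforce
      thus "norm (u z) * norm (v' z - v z) \<le> \<bar>Bu\<bar> * \<eta>"
        by (intro mult_mono) (use v'(2) z \<eta>(1) in \<open>auto intro: less_imp_le\<close>)
    qed
    also have "\<dots> = \<eta> * (\<bar>Bu\<bar> + \<bar>Bv\<bar> + 2) - \<eta>" by (simp add: algebra_simps)
    also have "\<dots> < \<epsilon>" using \<eta> by linarith
    finally show "norm (u' z * v' z - u z * v z) < \<epsilon>" .
  qed
qed

lemma U_one: "(\<lambda>z. 1) \<in> U" by (rule one)

lemma U_const: "(\<lambda>z. r *\<^sub>R 1) \<in> U" using U_scaleR[OF U_one] by simp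

lemma U_zero: "(\<lambda>z. 0) \<in> U" using U_const[of 0] by simp

lemma U_diff: "u \<in> U \<Longrightarrow> v \<in> U \<Longrightarrow> (\<lambda>z. u z - v z) \<in> U"
  using U_add[of u "\<lambda>z. (-1) *\<^sub>R v z"] U_scaleR[of v "-1"] by simp

lemma U_sum: "finite I \<Longrightarrow> (\<And>i. i \<in> I \<Longrightarrow> f i \<in> U) \<Longrightarrow> (\<lambda>z. \<Sum>i\<in>I. f i z) \<in> U"
proof (induction I rule: finite_induct)
  case empty thus ?case using U_zero by simp
next
  case (insert i I)
  thus ?case using U_add[of "f i" "\<lambda>z. \<Sum>i\<in>I. f i z"] by simp
qed

lemma U_power: "u \<in> U \<Longrightarrow> (\<lambda>z. u z ^ n) \<in> U"
proof (induction n)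
  case 0 thus ?case using U_one by simp
next
  case (Suc n) thus ?case using U_mult[of u "\<lambda>z. u z ^ n"] by simp
qed

lemma tail_bound:
  fixes a :: "nat \<Rightarrow> 'b::banach"
  assumes b: "\<And>n. norm (a n) \<le> c * \<theta>^n" and t: "0 \<le> \<theta>" "\<theta> < 1"
  shows "summable a" "norm ((\<Sum>n. a n) - (\<Sum>i<N. a i)) \<le> c * \<theta>^N / (1 - \<theta>)"
proof -
  have g: "summable (\<lambda>n. c * \<theta>^n)" using t by (intro summable_mult summable_geometric) simp
  show s: "summable a"
    by (rule summable_norm_cancel, rule summable_comparison_test'[OF g, of 0]) (simp add: b)
  have "(\<Sum>n. a n) - (\<Sum>i<N. a i) = (\<Sum>n. a (n + N))" by (rule suminf_minus_initial_segment[OF s, symmetric])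
  also have "norm \<dots> \<le> (\<Sum>n. c * \<theta>^N * \<theta>^n)"
  proof (rule norm_suminf_le)
    show "norm (a (n + N)) \<le> c * \<theta>^N * \<theta>^n" for n using b[of "n+N"] by (simp add: power_add mult_ac)
    show "summable (\<lambda>n. c * \<theta>^N * \<theta>^n)" using t by (intro summable_mult summable_geometric) simp
  qed
  also have "\<dots> = c * \<theta>^N * (1 / (1 - \<theta>))"
    using t by (simp add: suminf_mult suminf_geometric)
  finally show "norm ((\<Sum>n. a n) - (\<Sum>i<N. a i)) \<le> c * \<theta>^N / (1 - \<theta>)" by simp
qed

lemma U_series:
  assumes e: "\<And>n. e n \<in> U" and b: "\<And>n z. z \<in> topspace X \<Longrightarrow> norm (e n z) \<le> c * \<theta>^n"
    and t: "0 \<le> \<theta>" "\<theta> < 1"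
  shows "(\<lambda>z. \<Sum>n. e n z) \<in> U"
proof -
  define P where "P N = (\<lambda>z. \<Sum>i<N. e i z)" for N
  have PU: "P N \<in> U" for N unfolding P_def by (rule U_sum) (auto simp: e)
  have tail: "norm ((\<Sum>n. e n z) - P N z) \<le> c * \<theta>^N / (1 - \<theta>)" if "z \<in> topspace X" for z N
    unfolding P_def by (rule tail_bound(2)) (use b that t in auto)
  have lim: "(\<lambda>N. c * \<theta>^N / (1 - \<theta>)) \<longlonglongrightarrow> 0"
    using t by (intro tendsto_divide_zero tendsto_mult_right_zero LIMSEQ_power_zero) auto
  have ev: "\<forall>\<^sub>F N in sequentially. \<forall>z\<in>topspace X. norm ((\<Sum>n. e n z) - P N z) < \<epsilon>" if "\<epsilon> > 0" for \<epsilon>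
  proof -
    have "\<forall>\<^sub>F N in sequentially. c * \<theta>^N / (1 - \<theta>) < \<epsilon>" using order_tendstoD(2)[OF lim that] .
    thus ?thesis
    proof eventually_elim
      case (elim N)
      show ?case
      proof
        fix z assume "z \<in> topspace X"
        from tail[OF this, of N] elim show "norm ((\<Sum>n. e n z) - P N z) < \<epsilon>" by linarith
      qed
    qed
  qed
  show ?thesis unfolding uclosure_def CXA_def
  proof (intro CollectI conjI allI impI)
    have "continuous_map X Met_TC.mtopology (\<lambda>z. \<Sum>n. e n z)"
    proof (rule Met_TC.continuous_map_uniform_limit[where F=sequentially and f=P])
      show "\<forall>\<^sub>F N in sequentially. continuous_map X Met_TC.mtopology (P N)"
        using PU U_cont by simp
      fix \<epsilon> :: real assume "\<epsilon> > 0"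
      thus "\<forall>\<^sub>F N in sequentially. \<forall>z\<in>topspace X. (\<Sum>n. e n z) \<in> UNIV \<and> dist (P N z) (\<Sum>n. e n z) < \<epsilon>"
        using ev[of \<epsilon>] by (simp add: dist_norm norm_minus_commute)
    qed simp
    thus "continuous_map X euclidean (\<lambda>z. \<Sum>n. e n z)" by simp
    fix \<epsilon> :: real assume "\<epsilon> > 0"
    hence "\<epsilon>/2 > 0" by simp
    from ev[OF this] obtain N0 where N0: "\<forall>N\<ge>N0. \<forall>z\<in>topspace X. norm ((\<Sum>n. e n z) - P N z) < \<epsilon>/2"
      unfolding eventually_sequentially by blast
    define N where "N = N0"
    have N: "\<forall>z\<in>topspace X. norm ((\<Sum>n. e n z) - P N z) < \<epsilon>/2" using N0 by (simp add: N_def)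
    obtain v where v: "v \<in> E" "\<forall>z\<in>topspace X. norm (v z - P N z) < \<epsilon>/2"
      using U_approx[OF PU \<open>\<epsilon>/2 > 0\<close>] by blast
    show "\<exists>v\<in>E. \<forall>z\<in>topspace X. norm (v z - (\<Sum>n. e n z)) < \<epsilon>"
    proof (intro bexI[OF _ v(1)] ballI)
      fix z assume z: "z \<in> topspace X"
      have "norm (v z - (\<Sum>n. e n z)) \<le> norm (v z - P N z) + norm ((\<Sum>n. e n z) - P N z)"
      proof -
        have "v z - (\<Sum>n. e n z) = (v z - P N z) - ((\<Sum>n. e n z) - P N z)" by simp
        thus ?thesis by (metis norm_triangle_ineq4)
      qed
      thus "norm (v z - (\<Sum>n. e n z)) < \<epsilon>" using v(2) N z by fastforce
    qed
  qed
qed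

lemma step_S:
  assumes d: "d \<in> U" and sd: "sa_fun X d" and x: "x \<in> topspace X" and r: "norm (d x) > 0"
  shows "\<exists>e\<in>U. sa_fun X e \<and> (\<forall>z\<in>topspace X. norm (e z) \<le> norm (d x)) \<and> norm (e x - d x) \<le> norm (d x) / 4"
proof -
  define r where "r = norm (d x)"
  define k where "k = 1 / (2 * r)"
  define K where "K = k^2"
  have k0: "k > 0" using r by (simp add: k_def r_def)
  have K0: "K > 0" using k0 by (simp add: K_def)
  have sqK: "sqrt K = k" using k0 by (simp add: K_def)
  obtain M where M: "\<forall>z\<in>topspace X. norm (d z) \<le> M" using U_bounded[OF d] by blast
  define S where "S = K * M^2 + 1"
  define c where "c = S + 1"
  define \<theta> where "\<theta> = S / c"
  have "K * M^2 \<ge> 0" using K0 by simp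
  hence S0: "S > 0" by (simp add: S_def)
  have c0: "c > 0" using S0 by (simp add: c_def)
  have \<theta>: "0 \<le> \<theta>" "\<theta> < 1" using S0 by (auto simp: \<theta>_def c_def)
  have sa: "adj (d z) = d z" if "z \<in> topspace X" for z using sd that by (simp add: sa_fun_def selfadjoint_def)
  define \<rho> where "\<rho> z = (1/c) *\<^sub>R (S *\<^sub>R 1 - K *\<^sub>R (d z * d z))" for z
  have \<rho>U: "\<rho> \<in> U"
    unfolding \<rho>_def by (intro U_scaleR U_diff U_const U_mult d)
  have \<rho>b: "norm (\<rho> z) \<le> \<theta>" if z: "z \<in> topspace X" for z
  proof -
    define y where "y = sqrt K *\<^sub>R d z"
    have ay: "adj y = y" by (simp add: y_def adj_scaleR sa[OF z])
    have "(norm (d z))^2 \<le> M^2" using M z by (intro power_mono) auto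
    hence "(norm y)^2 \<le> K * M^2" using K0 by (simp add: y_def power_mult_distrib mult_left_mono)
    hence "(norm y)^2 < S" by (simp add: S_def)
    from square_cert[OF ay this] have "norm (S *\<^sub>R 1 - y * y) \<le> S" .
    moreover have "y * y = K *\<^sub>R (d z * d z)" using K0 by (simp add: y_def)
    ultimately show ?thesis using c0 by (simp add: \<rho>_def \<theta>_def divide_right_mono)
  qed
  define g where "g z = (\<Sum>n. (1/c) *\<^sub>R (\<rho> z ^ n))" for z
  have gU: "g \<in> U"
    unfolding g_def
  proof (rule U_series[where c="1/c" and \<theta>=\<theta>])
    show "(\<lambda>z. (1/c) *\<^sub>R (\<rho> z ^ n)) \<in> U" for n using U_scaleR[OF U_power[OF \<rho>U]] .
    show "norm ((1/c) *\<^sub>R (\<rho> z ^ n)) \<le> 1/c * \<theta>^n" if "z \<in> topspace X" for n z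
    proof -
      have "norm (\<rho> z ^ n) \<le> \<theta>^n"
        using norm_power_ineq[of "\<rho> z" n] power_mono[OF \<rho>b[OF that] norm_ge_zero, of n] by linarith
      thus ?thesis using c0 by (simp add: divide_right_mono)
    qed
  qed (use \<theta> in auto)
  have inv: "(1 + K *\<^sub>R (d z * d z)) * g z = 1 \<and> g z * (1 + K *\<^sub>R (d z * d z)) = 1" if z: "z \<in> topspace X" for z
  proof -
    have n1: "norm (\<rho> z) < 1" using \<rho>b[OF z] \<theta> by linarith
    note N = neumann[OF n1]
    have geq: "g z = (1/c) *\<^sub>R (\<Sum>n. \<rho> z ^ n)"
      unfolding g_def by (rule bounded_linear.suminf[OF bounded_linear_scaleR_right N(1), symmetric])
    have meq: "1 + K *\<^sub>R (d z * d z) = c *\<^sub>R (1 - \<rho> z)"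
    proof -
      have "c *\<^sub>R (1 - \<rho> z) = c *\<^sub>R 1 - (S *\<^sub>R 1 - K *\<^sub>R (d z * d z))"
        using c0 by (simp add: \<rho>_def scaleR_right_diff_distrib)
      also have "\<dots> = (c - S) *\<^sub>R 1 + K *\<^sub>R (d z * d z)" by (simp add: algebra_simps)
      also have "c - S = 1" by (simp add: c_def)
      finally show ?thesis by simp
    qed
    show ?thesis unfolding geq meq using c0 N(2,3) by simp
  qed
  define e where "e z = d z * g z" for z
  have eU: "e \<in> U" unfolding e_def by (rule U_mult[OF d gU])
  have RB: "adj (e z) = e z \<and> norm (e z) \<le> r \<and> e z - d z = - (K *\<^sub>R (d z * (d z * (d z * g z))))"
    if z: "z \<in> topspace X" for z
  proof -
    note R = rational_bound[OF sa[OF z] K0 conjunct1[OF inv[OF z]] conjunct2[OF inv[OF z]]]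
    have "1 / (2 * sqrt K) = r" using r by (simp add: sqK k_def r_def)
    thus ?thesis using R by (simp add: e_def)
  qed
  have "norm (e x - d x) \<le> r / 4"
  proof -
    have "norm (e x - d x) = K * norm ((d x * d x) * e x)"
      using RB[OF x] K0 by (simp add: e_def mult.assoc)
    also have "\<dots> \<le> K * (norm (d x) * norm (d x) * norm (e x))"
    proof -
      have "norm (d x * d x * e x) \<le> norm (d x * d x) * norm (e x)" by (rule norm_mult_ineq)
      also have "\<dots> \<le> norm (d x) * norm (d x) * norm (e x)"
        by (intro mult_right_mono norm_mult_ineq) simp
      finally show ?thesis using K0 by (intro mult_left_mono) auto
    qed
    also have "\<dots> \<le> K * (r * r * r)"
      using RB[OF x] K0 by (intro mult_left_mono) (auto simp: r_def intro: mult_left_mono)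
    also have "\<dots> = r / 4" using r by (simp add: K_def k_def r_def power2_eq_square field_simps)
    finally show ?thesis .
  qed
  thus ?thesis using eU RB unfolding r_def by (auto simp: sa_fun_def selfadjoint_def)
qed

end



definition cert :: "'a::cstar_algebra_1 \<Rightarrow> bool" where
  "cert c \<longleftrightarrow> adj c = c \<and> (\<exists>s\<ge>0. norm (s *\<^sub>R 1 - c) \<le> s)"

lemma cert_nonneg: "cert c \<Longrightarrow> nonneg c"
  unfolding cert_def using nonneg_cert by blast

lemma cert_add: assumes "cert a" "cert b" shows "cert (a + b)"
proof -
  obtain s where s: "s \<ge> 0" "norm (s *\<^sub>R 1 - a) \<le> s" using assms(1) by (auto simp: cert_def)
  obtain t where t: "t \<ge> 0" "norm (t *\<^sub>R 1 - b) \<le> t" using assms(2) by (auto simp: cert_def)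
  have "(s + t) *\<^sub>R 1 - (a + b) = (s *\<^sub>R 1 - a) + (t *\<^sub>R 1 - b)" by (simp add: algebra_simps)
  hence "norm ((s + t) *\<^sub>R 1 - (a + b)) \<le> s + t"
    using s t by (metis add_mono norm_triangle_ineq order_trans)
  thus ?thesis using assms s t by (auto simp: cert_def adj_add intro!: exI[of _ "s + t"])
qed

lemma cert_scale: assumes "r \<ge> 0" "cert a" shows "cert (r *\<^sub>R a)"
proof -
  obtain s where s: "s \<ge> 0" "norm (s *\<^sub>R 1 - a) \<le> s" using assms(2) by (auto simp: cert_def)
  have "(r * s) *\<^sub>R 1 - r *\<^sub>R a = r *\<^sub>R (s *\<^sub>R 1 - a)" by (simp add: algebra_simps)
  hence "norm ((r * s) *\<^sub>R 1 - r *\<^sub>R a) \<le> r * s" using assms s by (simp add: mult_left_mono)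
  thus ?thesis using assms s by (auto simp: cert_def adj_scaleR intro!: exI[of _ "r * s"])
qed

lemma cert_sq: assumes "adj y = y" shows "cert (y * y)"
proof -
  have "norm ((norm y ^ 2 + 1) *\<^sub>R 1 - y * y) \<le> norm y ^ 2 + 1"
    by (rule square_cert[OF assms]) simp
  moreover have "norm y ^ 2 + 1 \<ge> 0" by simp
  ultimately show ?thesis using assms unfolding cert_def by (metis adj_mult)
qed

lemma cert_near: assumes "adj b = b" "norm b \<le> s" shows "cert (s *\<^sub>R 1 - b)"
proof -
  have "s \<ge> 0" using assms(2) norm_ge_zero order_trans by blast
  thus ?thesis using assms by (auto simp: cert_def adj_diff adj_scaleR intro!: exI[of _ s])
qed

lemma cert_zero: "cert 0"
  unfolding cert_def by (auto intro!: exI[of _ 0])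

lemma cert_sum: "(\<And>i. i \<in> I \<Longrightarrow> cert (f i)) \<Longrightarrow> cert (sum f I)"
  by (induction I rule: infinite_finite_induct) (auto simp: cert_zero cert_add)

lemma adj_sum: "adj (sum f I) = (\<Sum>i\<in>I. adj (f i :: 'a::cstar_algebra_1))"
  by (induction I rule: infinite_finite_induct) (simp_all add: adj_add)

lemma quad_id_minus:
  fixes \<alpha> :: "'a::cstar_algebra_1"
  assumes "\<delta> > 0"
  shows "(1/\<delta>) *\<^sub>R ((\<alpha> - (\<delta>/2) *\<^sub>R 1) * (\<alpha> - (\<delta>/2) *\<^sub>R 1)) = (1/\<delta>) *\<^sub>R (\<alpha> * \<alpha>) - \<alpha> + (\<delta>/4) *\<^sub>R 1"
proof -
  have "(\<alpha> - (\<delta>/2) *\<^sub>R 1) * (\<alpha> - (\<delta>/2) *\<^sub>R 1) = \<alpha> * \<alpha> - \<delta> *\<^sub>R \<alpha> + (\<delta>^2/4) *\<^sub>R 1"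
    by (simp add: algebra_simps power2_eq_square scaleR_add_left[symmetric])
  moreover have h: "(1/2::real) *\<^sub>R \<alpha> + (1/2) *\<^sub>R \<alpha> = \<alpha>" by (simp flip: scaleR_add_left)
  ultimately show ?thesis using assms by (simp add: algebra_simps power2_eq_square h)
qed

lemma quad_id_plus:
  fixes \<alpha> :: "'a::cstar_algebra_1"
  assumes "\<delta> > 0"
  shows "(1/\<delta>) *\<^sub>R ((\<alpha> + (\<delta>/2) *\<^sub>R 1) * (\<alpha> + (\<delta>/2) *\<^sub>R 1)) = (1/\<delta>) *\<^sub>R (\<alpha> * \<alpha>) + \<alpha> + (\<delta>/4) *\<^sub>R 1"
proof -
  have "(\<alpha> + (\<delta>/2) *\<^sub>R 1) * (\<alpha> + (\<delta>/2) *\<^sub>R 1) = \<alpha> * \<alpha> + \<delta> *\<^sub>R \<alpha> + (\<delta>^2/4) *\<^sub>R 1"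
    by (simp add: algebra_simps power2_eq_square scaleR_add_left[symmetric])
  moreover have h: "(1/2::real) *\<^sub>R \<alpha> + (1/2) *\<^sub>R \<alpha> = \<alpha>" by (simp flip: scaleR_add_left)
  ultimately show ?thesis using assms by (simp add: algebra_simps power2_eq_square h)
qed

context cxa
begin

lemma sym_U: assumes "w \<in> E" shows "(\<lambda>z. (1/2) *\<^sub>R (w z + adj (w z))) \<in> U" "sa_fun X (\<lambda>z. (1/2) *\<^sub>R (w z + adj (w z)))"
proof -
  show "(\<lambda>z. (1/2) *\<^sub>R (w z + adj (w z))) \<in> U"
    by (intro U_scaleR U_add E_U[OF assms] U_adj)
  show "sa_fun X (\<lambda>z. (1/2) *\<^sub>R (w z + adj (w z)))"
    by (simp add: sa_fun_def selfadjoint_def adj_scaleR adj_add adj_adj add.commute)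
qed

lemma sym_close: assumes "adj b = b"
  shows "norm ((1/2) *\<^sub>R (v + adj v) - b) \<le> norm (v - b)"
proof -
  have "(1/2) *\<^sub>R (v + adj v) - b = (1/2) *\<^sub>R ((v - b) + adj (v - b))"
  proof -
    have "(v - b) + adj (v - b) = (v + adj v) - 2 *\<^sub>R b" by (simp add: adj_diff assms scaleR_2 algebra_simps)
    hence "(1/2) *\<^sub>R ((v - b) + adj (v - b)) = (1/2) *\<^sub>R ((v + adj v) - 2 *\<^sub>R b)"
      by (simp only:)
    also have "\<dots> = (1/2) *\<^sub>R (v + adj v) - b" by (simp add: scaleR_right_diff_distrib)
    finally show ?thesis by (rule sym)
  qed
  also have "norm \<dots> \<le> (1/2) * (norm (v - b) + norm (adj (v - b)))"
    using norm_triangle_ineq[of "v - b" "adj (v - b)"] by simp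
  finally show ?thesis by simp
qed

definition approxb :: "'x \<Rightarrow> 'a \<Rightarrow> bool" where
  "approxb x b \<longleftrightarrow> adj b = b \<and> (\<forall>\<epsilon>>0. \<exists>w\<in>E. norm (w x - b) < \<epsilon>)"

lemma approxb_diff: assumes "approxb x b" "e \<in> U" "sa_fun X e" "x \<in> topspace X"
  shows "approxb x (b - e x)"
  unfolding approxb_def
proof (intro conjI allI impI)
  show "adj (b - e x) = b - e x" using assms by (simp add: approxb_def adj_diff sa_fun_def selfadjoint_def)
  fix \<epsilon> :: real assume "\<epsilon> > 0"
  hence h: "\<epsilon>/2 > 0" by simp
  have all: "\<forall>\<epsilon>>0. \<exists>w\<in>E. norm (w x - b) < \<epsilon>" using assms(1) by (simp add: approxb_def)
  have "\<exists>w\<in>E. norm (w x - b) < \<epsilon>/2" using all[rule_format, OF h] .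
  then obtain w where w: "w \<in> E" "norm (w x - b) < \<epsilon>/2" by blast
  obtain v where v: "v \<in> E" "\<forall>z\<in>topspace X. norm (v z - e z) < \<epsilon>/2" using U_approx[OF assms(2) h] by blast
  show "\<exists>w\<in>E. norm (w x - (b - e x)) < \<epsilon>"
  proof (intro bexI[OF _ E_diff[OF w(1) v(1)]])
    have "(w x - v x) - (b - e x) = (w x - b) - (v x - e x)" by simp
    hence "norm ((w x - v x) - (b - e x)) \<le> norm (w x - b) + norm (v x - e x)" by (metis norm_triangle_ineq4)
    thus "norm (w x - v x - (b - e x)) < \<epsilon>" using w(2) v(2) assms(4) by fastforce
  qed
qed

lemma approxb_U: assumes "u \<in> U" "sa_fun X u" "x \<in> topspace X" shows "approxb x (u x)"
  unfolding approxb_def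
proof (intro conjI allI impI)
  show "adj (u x) = u x" using assms by (simp add: sa_fun_def selfadjoint_def)
  fix \<epsilon> :: real assume "\<epsilon> > 0"
  then obtain v where v: "v \<in> E" "\<forall>z\<in>topspace X. norm (v z - u z) < \<epsilon>" using U_approx[OF assms(1)] by blast
  thus "\<exists>w\<in>E. norm (w x - u x) < \<epsilon>" using assms(3) by blast
qed

lemma one_step:
  assumes x: "x \<in> topspace X" and b: "approxb x b"
  shows "\<exists>e. e \<in> U \<and> sa_fun X e \<and> (\<forall>z\<in>topspace X. norm (e z) \<le> 2 * norm b) \<and> norm (b - e x) \<le> norm b / 2"
proof (cases "b = 0")
  case True
  thus ?thesis using U_zero by (intro exI[of _ "\<lambda>z. 0"]) (auto simp: sa_fun_def selfadjoint_def)
next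
  case False
  hence nb: "norm b > 0" by simp
  have "norm b / 8 > 0" using nb by simp
  have all: "\<forall>\<epsilon>>0. \<exists>w\<in>E. norm (w x - b) < \<epsilon>" using b by (simp add: approxb_def)
  have "\<exists>w\<in>E. norm (w x - b) < norm b / 8" using all[rule_format, OF \<open>norm b / 8 > 0\<close>] .
  then obtain w where w: "w \<in> E" "norm (w x - b) < norm b / 8" by blast
  define d where "d z = (1/2) *\<^sub>R (w z + adj (w z))" for z
  have dU: "d \<in> U" and sd: "sa_fun X d" using sym_U[OF w(1)] by (simp_all add: d_def[abs_def])
  have db: "norm (d x - b) < norm b / 8"
    using sym_close[of b "w x"] b w(2) by (auto simp: d_def approxb_def)
  have r1: "norm (d x) \<ge> norm b - norm b / 8" using db norm_triangle_ineq2[of b "d x"]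
    by (simp add: norm_minus_commute)
  have r2: "norm (d x) \<le> norm b + norm b / 8" using db norm_triangle_ineq2[of "d x" b] by simp
  have r: "norm (d x) > 0" using r1 nb by linarith
  obtain e where e: "e \<in> U" "sa_fun X e" "\<forall>z\<in>topspace X. norm (e z) \<le> norm (d x)" "norm (e x - d x) \<le> norm (d x) / 4"
    using step_S[OF dU sd x r] by blast
  have "norm (b - e x) \<le> norm (b - d x) + norm (e x - d x)"
  proof -
    have "b - e x = (b - d x) - (e x - d x)" by simp
    thus ?thesis by (metis norm_triangle_ineq4)
  qed
  also have "\<dots> \<le> norm b / 2" using db r2 e(4) nb norm_minus_commute[of b "d x"] by linarith
  finally have fin: "norm (b - e x) \<le> norm b / 2" .
  have "\<forall>z\<in>topspace X. norm (e z) \<le> 2 * norm b"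
  proof
    fix z assume "z \<in> topspace X"
    hence "norm (e z) \<le> norm (d x)" using e(3) by blast
    thus "norm (e z) \<le> 2 * norm b" using r2 nb by linarith
  qed
  thus ?thesis using e(1,2) fin by blast
qed

lemma lifting:
  assumes x: "x \<in> topspace X" and b: "approxb x b"
  shows "\<exists>u\<in>U. sa_fun X u \<and> u x = b \<and> (\<forall>z\<in>topspace X. norm (u z) \<le> 4 * norm b)"
proof -
  have "\<forall>c. \<exists>e. approxb x c \<longrightarrow> e \<in> U \<and> sa_fun X e \<and> (\<forall>z\<in>topspace X. norm (e z) \<le> 2 * norm c) \<and> norm (c - e x) \<le> norm c / 2"
    using one_step[OF x] by blast
  from choice[OF this] obtain F where F0: "\<forall>c. approxb x c \<longrightarrow> F c \<in> U \<and> sa_fun X (F c) \<and> (\<forall>z\<in>topspace X. norm (F c z) \<le> 2 * norm c) \<and> norm (c - F c x) \<le> norm c / 2"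
    by blast
  have F: "\<And>c. approxb x c \<Longrightarrow> F c \<in> U \<and> sa_fun X (F c) \<and> (\<forall>z\<in>topspace X. norm (F c z) \<le> 2 * norm c) \<and> norm (c - F c x) \<le> norm c / 2" for c
    using F0 by blast
  define bs where "bs n = ((\<lambda>c. c - F c x) ^^ n) b" for n
  have bsS: "bs (Suc n) = bs n - F (bs n) x" for n by (simp add: bs_def)
  have inv: "approxb x (bs n) \<and> norm (bs n) \<le> norm b * (1/2)^n" for n
  proof (induction n)
    case 0 thus ?case using b by (simp add: bs_def)
  next
    case (Suc n)
    note Fn = F[OF conjunct1[OF Suc]]
    have "approxb x (bs (Suc n))" unfolding bsS using approxb_diff Fn x Suc by blast
    moreover have "norm (bs (Suc n)) \<le> norm b * (1/2)^Suc n" unfolding bsS using Fn Suc by simp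
    ultimately show ?case by blast
  qed
  define e where "e n = F (bs n)" for n
  have eF: "e n \<in> U \<and> sa_fun X (e n) \<and> (\<forall>z\<in>topspace X. norm (e n z) \<le> 2 * norm (bs n))" for n
    using F[OF conjunct1[OF inv[of n]]] by (simp add: e_def)
  have eb: "norm (e n z) \<le> (2 * norm b) * (1/2)^n" if "z \<in> topspace X" for n z
    using eF[of n] inv[of n] that by fastforce
  define u where "u z = (\<Sum>n. e n z)" for z
  have uU: "u \<in> U" unfolding u_def[abs_def] by (rule U_series[where c="2 * norm b" and \<theta>="1/2"]) (use eF eb in auto)
  have sm: "summable (\<lambda>n. e n z)" if "z \<in> topspace X" for z
    by (rule tail_bound(1)[where c="2 * norm b" and \<theta>="1/2"]) (use eb that in auto)
  have sau: "sa_fun X u" unfolding sa_fun_def selfadjoint_def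
  proof
    fix z assume z: "z \<in> topspace X"
    have "adj (u z) = (\<Sum>n. adj (e n z))" unfolding u_def by (rule bounded_linear.suminf[OF bounded_linear_adj sm[OF z]])
    also have "\<dots> = u z" using eF z by (simp add: u_def sa_fun_def selfadjoint_def)
    finally show "adj (u z) = u z" .
  qed
  have lim: "bs \<longlonglongrightarrow> 0"
  proof (rule tendsto_norm_zero_cancel, rule Lim_null_comparison)
    show "\<forall>\<^sub>F n in sequentially. norm (norm (bs n)) \<le> norm b * (1/2)^n" using inv by simp
    show "(\<lambda>n. norm b * (1/2::real)^n) \<longlonglongrightarrow> 0" by (intro tendsto_mult_right_zero LIMSEQ_power_zero) simp
  qed
  have "(\<lambda>n. bs n - bs (Suc n)) sums (bs 0 - 0)" by (rule telescope_sums'[OF lim])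
  moreover have "(\<lambda>n. bs n - bs (Suc n)) = (\<lambda>n. e n x)" by (simp add: bsS e_def)
  moreover have "bs 0 = b" by (simp add: bs_def)
  ultimately have "(\<lambda>n. e n x) sums b" by simp
  hence ux: "u x = b" unfolding u_def by (rule sums_unique[symmetric])
  have ub: "norm (u z) \<le> 4 * norm b" if z: "z \<in> topspace X" for z
  proof -
    have "norm (u z) \<le> (\<Sum>n. (2 * norm b) * (1/2)^n)" unfolding u_def
      by (rule norm_suminf_le) (use eb z in auto)
    also have "\<dots> = 4 * norm b" by (simp add: suminf_mult suminf_geometric)
    finally show ?thesis .
  qed
  show ?thesis
  proof (intro bexI[OF _ uU] conjI ballI)
    show "sa_fun X u" by (rule sau)
    show "u x = b" by (rule ux)
    show "norm (u z) \<le> 4 * norm b" if "z \<in> topspace X" for z using ub[OF that] .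
  qed
qed

end



theorem lemma2p6:
  fixes X :: "'x topology" and E :: "('x \<Rightarrow> 'a::cstar_algebra_1) set"
    and x :: 'x and \<delta> :: real and f :: "'x \<Rightarrow> 'a"
  assumes "compact_space X" and "Hausdorff_space X"
    and "star_subalgebra X E"
    and "(\<lambda>z. 1) \<in> uclosure X E"
    and "x \<in> topspace X" and "\<delta> > 0"
    and "f \<in> Delta2 X E" and "sa_fun X f"
  shows "\<exists>g h. g \<in> uclosure X E \<and> h \<in> uclosure X E \<and> sa_fun X g \<and> sa_fun X h \<and>
           g x = f x \<and> f x = h x \<and>
           fun_le X (\<lambda>z. g z - \<delta> *\<^sub>R 1) f \<and> fun_le X f (\<lambda>z. h z + \<delta> *\<^sub>R 1)"
proof -
  interpret cxa X E using assms(1,3,4) by unfold_locales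
  note x = assms(5) and d0 = assms(6)
  have fC: "f \<in> CXA X" using assms(7) by (simp add: Delta2_def)
  have fcont: "continuous_map X euclidean f" using fC by (simp add: CXA_def)
  have fD: "\<And>y \<epsilon>. y \<in> topspace X \<Longrightarrow> \<epsilon> > 0 \<Longrightarrow> \<exists>v\<in>E. norm (v x - f x) < \<epsilon> \<and> norm (v y - f y) < \<epsilon>"
    using assms(7) x by (simp add: Delta2_def)
  have fsa: "\<And>z. z \<in> topspace X \<Longrightarrow> adj (f z) = f z" using assms(8) by (simp add: sa_fun_def selfadjoint_def)
  define a where "a = f x"
  have aC: "approxb x a" unfolding approxb_def
  proof (intro conjI allI impI)
    show "adj a = a" using fsa[OF x] by (simp add: a_def)
    fix \<epsilon> :: real assume "\<epsilon> > 0"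
    from fD[OF x this] show "\<exists>w\<in>E. norm (w x - a) < \<epsilon>" by (auto simp: a_def)
  qed
  obtain u where u: "u \<in> U" "sa_fun X u" "u x = a" using lifting[OF x aC] by blast
  have usa: "\<And>z. z \<in> topspace X \<Longrightarrow> adj (u z) = u z" using u(2) by (simp add: sa_fun_def selfadjoint_def)
  have "\<forall>y\<in>topspace X. \<exists>W. W \<in> U \<and> sa_fun X W \<and> W x = a \<and> norm (W y - f y) < \<delta>/2"
  proof
    fix y assume y: "y \<in> topspace X"
    define \<eta> where "\<eta> = \<delta> / 10"
    have \<eta>: "\<eta> > 0" using d0 by (simp add: \<eta>_def)
    obtain v where v: "v \<in> E" "norm (v x - f x) < \<eta>" "norm (v y - f y) < \<eta>" using fD[OF y \<eta>] by blast
    define d where "d z = (1/2) *\<^sub>R (v z + adj (v z))" for z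
    have dU: "d \<in> U" and sd: "sa_fun X d" using sym_U[OF v(1)] by (simp_all add: d_def[abs_def])
    have dx: "norm (d x - a) < \<eta>" using sym_close[OF fsa[OF x], of "v x"] v(2) by (simp add: d_def a_def)
    have dy: "norm (d y - f y) < \<eta>" using sym_close[OF fsa[OF y], of "v y"] v(3) by (simp add: d_def)
    have bC: "approxb x (a - d x)" by (rule approxb_diff[OF aC dU sd x])
    obtain e where e: "e \<in> U" "sa_fun X e" "e x = a - d x" "\<forall>z\<in>topspace X. norm (e z) \<le> 4 * norm (a - d x)"
      using lifting[OF x bC] by blast
    define W where "W z = d z + e z" for z
    have WU: "W \<in> U" unfolding W_def[abs_def] by (rule U_add[OF dU e(1)])
    have sW: "sa_fun X W" using sd e(2) by (simp add: W_def sa_fun_def selfadjoint_def adj_add)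
    have Wx: "W x = a" by (simp add: W_def e(3))
    have "norm (W y - f y) \<le> norm (d y - f y) + norm (e y)"
    proof -
      have "W y - f y = (d y - f y) + e y" by (simp add: W_def)
      thus ?thesis by (metis norm_triangle_ineq)
    qed
    also have "\<dots> < \<eta> + 4 * \<eta>"
    proof -
      have "norm (e y) \<le> 4 * norm (a - d x)" using e(4) y by blast
      also have "\<dots> \<le> 4 * \<eta>" using dx by (simp add: norm_minus_commute)
      finally show ?thesis using dy by linarith
    qed
    also have "\<dots> = \<delta>/2" by (simp add: \<eta>_def)
    finally show "\<exists>W. W \<in> U \<and> sa_fun X W \<and> W x = a \<and> norm (W y - f y) < \<delta>/2"
      using WU sW Wx by blast
  qed
  then obtain W where W: "\<And>y. y \<in> topspace X \<Longrightarrow> W y \<in> U \<and> sa_fun X (W y) \<and> W y x = a \<and> norm (W y y - f y) < \<delta>/2"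
    by metis
  define V where "V y = {z \<in> topspace X. norm (W y z - f z) \<in> {..<\<delta>/2}}" for y
  have Vopen: "openin X (V y)" if "y \<in> topspace X" for y
  proof -
    have "continuous_map X euclideanreal (\<lambda>z. norm (W y z - f z))"
      using W[OF that] U_cont fcont by (intro continuous_map_norm continuous_map_diff) auto
    thus ?thesis unfolding V_def by (rule openin_continuous_map_preimage) simp
  qed
  have cover: "topspace X \<subseteq> \<Union>(V ` topspace X)"
  proof
    fix z assume "z \<in> topspace X"
    thus "z \<in> \<Union>(V ` topspace X)" using W[of z] by (auto simp: V_def)
  qed
  have "compactin X (topspace X)" using assms(1) by (simp add: compact_space_def)
  then obtain FF where FF: "finite FF" "FF \<subseteq> V ` topspace X" "topspace X \<subseteq> \<Union>FF"
    using cover Vopen unfolding compactin_def by (metis (no_types, lifting) imageE)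
  obtain Y where Y: "Y \<subseteq> topspace X" "finite Y" "FF = V ` Y"
    using finite_subset_image[OF FF(1,2)] by blast
  define K where "K = 1 / \<delta>"
  have K0: "K \<ge> 0" using d0 by (simp add: K_def)
  define Q where "Q z = (\<Sum>y\<in>Y. (W y z - u z) * (W y z - u z))" for z
  have QU: "Q \<in> U" unfolding Q_def[abs_def]
    using Y W u(1) by (intro U_sum U_mult U_diff) auto
  have Qsa: "adj (Q z) = Q z" if "z \<in> topspace X" for z
    unfolding Q_def adj_sum using W Y usa that
    by (intro sum.cong refl) (auto simp: adj_mult adj_diff sa_fun_def selfadjoint_def)
  have Qx: "Q x = 0" using W Y u(3) by (auto simp: Q_def intro!: sum.neutral)
  define g where "g z = u z - K *\<^sub>R Q z" for z
  define h where "h z = u z + K *\<^sub>R Q z" for z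
  have gU: "g \<in> U" unfolding g_def[abs_def] by (intro U_diff U_scaleR u(1) QU)
  have hU: "h \<in> U" unfolding h_def[abs_def] by (intro U_add U_scaleR u(1) QU)
  have sg: "sa_fun X g" using usa Qsa by (simp add: g_def sa_fun_def selfadjoint_def adj_diff adj_scaleR)
  have sh: "sa_fun X h" using usa Qsa by (simp add: h_def sa_fun_def selfadjoint_def adj_add adj_scaleR)
  have gx: "g x = f x" by (simp add: g_def Qx u(3) a_def)
  have hx: "f x = h x" by (simp add: h_def Qx u(3) a_def)
  have local: "\<exists>\<alpha> \<beta> Q'. adj \<alpha> = \<alpha> \<and> adj \<beta> = \<beta> \<and> norm \<beta> \<le> \<delta> - \<delta>/4 \<and> cert Q' \<and>
       Q z = \<alpha> * \<alpha> + Q' \<and> f z - u z = \<alpha> + \<beta>" if z: "z \<in> topspace X" for z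
  proof -
    obtain y0 where y0: "y0 \<in> Y" "z \<in> V y0" using FF(3) Y(3) z by auto
    have y0t: "y0 \<in> topspace X" using y0 Y by auto
    define \<alpha> where "\<alpha> = W y0 z - u z"
    define \<beta> where "\<beta> = f z - W y0 z"
    define Q' where "Q' = (\<Sum>y\<in>Y - {y0}. (W y z - u z) * (W y z - u z))"
    have Wsa: "adj (W y z) = W y z" if "y \<in> Y" for y using W[of y] Y that z by (auto simp: sa_fun_def selfadjoint_def)
    have "adj \<alpha> = \<alpha>" using Wsa[OF y0(1)] usa[OF z] by (simp add: \<alpha>_def adj_diff)
    moreover have "adj \<beta> = \<beta>" using Wsa[OF y0(1)] fsa[OF z] by (simp add: \<beta>_def adj_diff)
    moreover have "norm \<beta> \<le> \<delta> - \<delta>/4"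
      using y0(2) d0 by (simp add: V_def \<beta>_def norm_minus_commute)
    moreover have "cert Q'" unfolding Q'_def
      using Wsa usa[OF z] by (intro cert_sum cert_sq) (simp add: adj_diff)
    moreover have "Q z = \<alpha> * \<alpha> + Q'"
      unfolding Q_def Q'_def \<alpha>_def using Y(2) y0(1) by (simp add: sum.remove)
    moreover have "f z - u z = \<alpha> + \<beta>" by (simp add: \<alpha>_def \<beta>_def)
    ultimately show ?thesis by blast
  qed
  have d4: "(\<delta>/4) *\<^sub>R (1::'a) + (\<delta> - \<delta>/4) *\<^sub>R 1 = \<delta> *\<^sub>R 1" by (simp flip: scaleR_add_left)
  have fle1: "fun_le X (\<lambda>z. g z - \<delta> *\<^sub>R 1) f" unfolding fun_le_def
  proof
    fix z assume z: "z \<in> topspace X"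
    obtain \<alpha> \<beta> Q' where L: "adj \<alpha> = \<alpha>" "adj \<beta> = \<beta>" "norm \<beta> \<le> \<delta> - \<delta>/4" "cert Q'"
      "Q z = \<alpha> * \<alpha> + Q'" "f z - u z = \<alpha> + \<beta>" using local[OF z] by blast
    define c where "c = (\<delta>/2) *\<^sub>R (1::'a)"
    have "f z - (g z - \<delta> *\<^sub>R 1) = (f z - u z) + K *\<^sub>R Q z + \<delta> *\<^sub>R 1" by (simp add: g_def)
    also have "\<dots> = (K *\<^sub>R (\<alpha> * \<alpha>) + \<alpha> + (\<delta>/4) *\<^sub>R 1) + K *\<^sub>R Q' + ((\<delta> - \<delta>/4) *\<^sub>R 1 - (- \<beta>))"
      using d4 by (simp add: L(5,6) algebra_simps)
    also have "K *\<^sub>R (\<alpha> * \<alpha>) + \<alpha> + (\<delta>/4) *\<^sub>R 1 = K *\<^sub>R ((\<alpha> + c) * (\<alpha> + c))"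
      unfolding K_def c_def by (rule quad_id_plus[OF d0, symmetric])
    finally have eq: "f z - (g z - \<delta> *\<^sub>R 1) = K *\<^sub>R ((\<alpha> + c) * (\<alpha> + c)) + K *\<^sub>R Q' + ((\<delta> - \<delta>/4) *\<^sub>R 1 - (- \<beta>))" .
    have "cert (K *\<^sub>R ((\<alpha> + c) * (\<alpha> + c)) + K *\<^sub>R Q' + ((\<delta> - \<delta>/4) *\<^sub>R 1 - (- \<beta>)))"
      using L K0 by (intro cert_add cert_scale cert_sq cert_near) (auto simp: c_def adj_add adj_scaleR adj_minus)
    thus "nonneg (f z - (g z - \<delta> *\<^sub>R 1))" unfolding eq by (rule cert_nonneg)
  qed
  have fle2: "fun_le X f (\<lambda>z. h z + \<delta> *\<^sub>R 1)" unfolding fun_le_def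
  proof
    fix z assume z: "z \<in> topspace X"
    obtain \<alpha> \<beta> Q' where L: "adj \<alpha> = \<alpha>" "adj \<beta> = \<beta>" "norm \<beta> \<le> \<delta> - \<delta>/4" "cert Q'"
      "Q z = \<alpha> * \<alpha> + Q'" "f z - u z = \<alpha> + \<beta>" using local[OF z] by blast
    define c where "c = (\<delta>/2) *\<^sub>R (1::'a)"
    have fu: "f z = u z + \<alpha> + \<beta>" using L(6) by (simp add: algebra_simps)
    have "h z + \<delta> *\<^sub>R 1 - f z = (K *\<^sub>R (\<alpha> * \<alpha>) - \<alpha> + (\<delta>/4) *\<^sub>R 1) + K *\<^sub>R Q' + ((\<delta> - \<delta>/4) *\<^sub>R 1 - \<beta>)"
      using d4 by (simp add: h_def fu L(5) algebra_simps)
    also have "K *\<^sub>R (\<alpha> * \<alpha>) - \<alpha> + (\<delta>/4) *\<^sub>R 1 = K *\<^sub>R ((\<alpha> - c) * (\<alpha> - c))"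
      unfolding K_def c_def by (rule quad_id_minus[OF d0, symmetric])
    finally have eq: "h z + \<delta> *\<^sub>R 1 - f z = K *\<^sub>R ((\<alpha> - c) * (\<alpha> - c)) + K *\<^sub>R Q' + ((\<delta> - \<delta>/4) *\<^sub>R 1 - \<beta>)" .
    have "cert (K *\<^sub>R ((\<alpha> - c) * (\<alpha> - c)) + K *\<^sub>R Q' + ((\<delta> - \<delta>/4) *\<^sub>R 1 - \<beta>))"
      using L K0 by (intro cert_add cert_scale cert_sq cert_near) (auto simp: c_def adj_diff adj_scaleR)
    thus "nonneg (h z + \<delta> *\<^sub>R 1 - f z)" unfolding eq by (rule cert_nonneg)
  qed
  show ?thesis using gU hU sg sh gx hx fle1 fle2 by blast
qed


end
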